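(* Let $\psi$ be an injective map from the positive integers to the positive integers and let $A=\{\psi(n): n\ge 1\}$. For every nonnegative integer $n$, \[ p^{A}(n)=\sum_{(N_0,N_1,N_2,\dots)}\ \prod_{j\ge 0} p^{A}_{1}(N_j), \] where the sum runs over all sequences $(N_0,N_1,N_2,\dots)$ of nonnegative integers (necessarily with only finitely many nonzero terms) satisfying $n=\sum_{i\ge 0}2^{i}N_i$.
   Context: For a set $A$ of positive integers and a positive integer $\alpha$, $p^{A}_{\alpha}(n)$ denotes the number of partitions of $n$ into parts from $A$ in which each part occurs at most $\alpha$ times, and $p^{A}(n)$ denotes the number of partitions of $n$ into parts from $A$ with no restriction on multiplicities. By convention $p^{A}_{\alpha}(0)=p^{A}(0)=1$, so the product on the right is effectively finite. (In the paper the sum is indexed by the rows of the "solution matrix" listing all nonnegative integer solutions of $n=\sum_{i\ge0}2^iN_i$.) *)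

theory Defs
  imports Main "HOL-Library.Multiset"
begin

definition part_count :: "nat set \<Rightarrow> nat \<Rightarrow> nat" where
  "part_count A n = card {M :: nat multiset. set_mset M \<subseteq> A \<and> sum_mset M = n}"

definition part_count_bounded :: "nat set \<Rightarrow> nat \<Rightarrow> nat \<Rightarrow> nat" where
  "part_count_bounded A \<alpha> n =
     card {M :: nat multiset. set_mset M \<subseteq> A \<and> sum_mset M = n \<and> (\<forall>x. count M x \<le> \<alpha>)}"

end

theory Submission
  imports Defs "HOL-Library.FuncSet"
begin

lemma count_mul_le_sum: "a * count M a \<le> sum_mset (M::nat multiset)"
proof -
  have "M = filter_mset (\<lambda>x. x = a) M + filter_mset (\<lambda>x. x \<noteq> a) M"
    by (simp add: multiset_partition)
  hence "sum_mset M = sum_mset (filter_mset (\<lambda>x. x = a) M) + sum_mset (filter_mset (\<lambda>x. x \<noteq> a) M)"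
    by (metis sum_mset.union)
  moreover have "filter_mset (\<lambda>x. x = a) M = replicate_mset (count M a) a"
    by (simp add: filter_eq_replicate_mset)
  ultimately show ?thesis by simp
qed

definition PP :: "nat set \<Rightarrow> nat \<Rightarrow> nat multiset set" where
  "PP A n = {M. set_mset M \<subseteq> A \<and> sum_mset M = n}"
definition DD :: "nat set \<Rightarrow> nat \<Rightarrow> nat multiset set" where
  "DD A n = {M. set_mset M \<subseteq> A \<and> sum_mset M = n \<and> (\<forall>x. count M x \<le> 1)}"

lemma finite_PP: assumes "0 \<notin> A" shows "finite (PP A n)"
proof (rule inj_on_finite[where f = "\<lambda>M. restrict (count M) {..n}" and B = "PiE {..n} (\<lambda>_. {..n})"])
  have bnd: "a \<le> n \<and> count M a \<le> n" if "M \<in> PP A n" "a \<in># M" for M a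
  proof -
    have aA: "a \<in> A" using that unfolding PP_def by auto
    have a1: "1 \<le> a" using aA assms by (cases a) auto
    have c1: "1 \<le> count M a" using that(2) by (simp add: Suc_le_eq)
    have ac: "a * count M a \<le> n" using count_mul_le_sum[of a M] that(1) by (simp add: PP_def)
    have "a \<le> a * count M a" using c1 by simp
    moreover have "count M a \<le> a * count M a" using a1 by simp
    ultimately show ?thesis using ac by linarith
  qed
  show "inj_on (\<lambda>M. restrict (count M) {..n}) (PP A n)"
  proof (rule inj_onI)
    fix M M' assume h: "M \<in> PP A n" "M' \<in> PP A n" "restrict (count M) {..n} = restrict (count M') {..n}"
    show "M = M'"
    proof (rule multiset_eqI)
      fix x show "count M x = count M' x"
      proof (cases "x \<le> n")
        case True
        have "restrict (count M) {..n} x = restrict (count M') {..n} x" using h(3) by simp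
        then show ?thesis using True by simp
      next
        case False
        then have "x \<notin># M" "x \<notin># M'" using bnd[OF h(1), of x] bnd[OF h(2), of x] by auto
        then show ?thesis by (simp add: not_in_iff)
      qed
    qed
  qed
  show "(\<lambda>M. restrict (count M) {..n}) ` PP A n \<subseteq> PiE {..n} (\<lambda>_. {..n})"
  proof (rule image_subsetI)
    fix M assume M: "M \<in> PP A n"
    have "\<forall>x\<in>{..n}. count M x \<in> {..n}"
    proof
      fix x show "count M x \<in> {..n}"
      proof (cases "x \<in># M")
        case True then show ?thesis using bnd[OF M True] by simp
      next
        case False then show ?thesis by (simp add: not_in_iff)
      qed
    qed
    then show "restrict (count M) {..n} \<in> PiE {..n} (\<lambda>_. {..n})" by (simp add: restrict_PiE_iff)
  qed
  show "finite (PiE {..n} (\<lambda>_::nat. {..n::nat}))" by (rule finite_PiE) auto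
qed

lemma finite_DD: assumes "0 \<notin> A" shows "finite (DD A n)"
  by (rule finite_subset[OF _ finite_PP[OF assms, of n]]) (auto simp: DD_def PP_def)


definition KK :: "nat \<Rightarrow> nat set" where "KK n = {k. k \<le> n \<and> even (n - k)}"

definition halfm :: "nat multiset \<Rightarrow> nat multiset" where
  "halfm M = Abs_multiset (\<lambda>a. count M a div 2)"
definition parm :: "nat multiset \<Rightarrow> nat multiset" where
  "parm M = Abs_multiset (\<lambda>a. count M a mod 2)"

lemma pos_in: "0 < count M x \<Longrightarrow> x \<in># M"
  by simp

lemma count_halfm[simp]: "count (halfm M) a = count M a div 2"
proof -
  have "finite {x. count M x div 2 > 0}"
  proof (rule finite_subset[of _ "set_mset M"])
    show "{x. count M x div 2 > 0} \<subseteq> set_mset M"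
    proof
      fix x assume "x \<in> {x. count M x div 2 > 0}"
      then have "0 < count M x" by (cases "count M x") auto
      then show "x \<in># M" by (rule pos_in)
    qed
  qed simp
  then show ?thesis unfolding halfm_def by (simp add: count_Abs_multiset)
qed

lemma count_parm[simp]: "count (parm M) a = count M a mod 2"
proof -
  have "finite {x. count M x mod 2 > 0}"
  proof (rule finite_subset[of _ "set_mset M"])
    show "{x. count M x mod 2 > 0} \<subseteq> set_mset M"
    proof
      fix x assume "x \<in> {x. count M x mod 2 > 0}"
      then have "0 < count M x" by (cases "count M x") auto
      then show "x \<in># M" by (rule pos_in)
    qed
  qed simp
  then show ?thesis unfolding parm_def by (simp add: count_Abs_multiset)
qed

lemma decomp: "M = parm M + halfm M + halfm M"
proof (rule multiset_eqI)
  fix x show "count M x = count (parm M + halfm M + halfm M) x"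
    using div_mult_mod_eq[of "count M x" 2] by (simp only: count_union count_halfm count_parm)
qed

lemma set_halfm: "set_mset (halfm M) \<subseteq> set_mset M"
proof
  fix x assume "x \<in># halfm M"
  then have "0 < count (halfm M) x" by (simp only: count_greater_zero_iff)
  then have "0 < count M x" by (cases "count M x") auto
  then show "x \<in># M" by (rule pos_in)
qed
lemma set_parm: "set_mset (parm M) \<subseteq> set_mset M"
proof
  fix x assume "x \<in># parm M"
  then have "0 < count (parm M) x" by (simp only: count_greater_zero_iff)
  then have "0 < count M x" by (cases "count M x") auto
  then show "x \<in># M" by (rule pos_in)
qed

lemma finite_KK: "finite (KK n)" by (rule finite_subset[of _ "{..n}"]) (auto simp: KK_def)

lemma rec_P:
  assumes "0 \<notin> A"
  shows "card (PP A n) = (\<Sum>k\<in>KK n. card (DD A k) * card (PP A ((n - k) div 2)))"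
proof -
  let ?S = "SIGMA k:KK n. DD A k \<times> PP A ((n - k) div 2)"
  let ?g = "\<lambda>(k::nat, S::nat multiset, M::nat multiset). S + M + M"
  have "bij_betw ?g ?S (PP A n)"
  proof (rule bij_betw_imageI)
    show "inj_on ?g ?S"
    proof (rule inj_onI)
      fix x y assume xy: "x \<in> ?S" "y \<in> ?S" "?g x = ?g y"
      obtain k S M where x: "x = (k, S, M)" by (cases x) auto
      obtain k' S' M' where y: "y = (k', S', M')" by (cases y) auto
      have h: "(k, S, M) \<in> ?S" "(k', S', M') \<in> ?S" "S + M + M = S' + M' + M'"
        using xy x y by auto
      have c1: "count S x \<le> 1" "count S' x \<le> 1" for x using h(1,2) by (auto simp: DD_def)
      have e: "count S x + 2 * count M x = count S' x + 2 * count M' x" for x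
        using arg_cong[OF h(3), of "\<lambda>X. count X x"] by simp
      have SS: "S = S'"
      proof (rule multiset_eqI)
        fix x
        show "count S x = count S' x" using e[of x] c1[of x] by presburger
      qed
      have MM: "M = M'" by (rule multiset_eqI) (use e SS in simp)
      have "k = sum_mset S" "k' = sum_mset S'" using h(1,2) by (auto simp: DD_def)
      then show "x = y" using SS MM x y by simp
    qed
    show "?g ` ?S = PP A n"
    proof
      show "?g ` ?S \<subseteq> PP A n"
      proof (rule image_subsetI)
        fix x assume x: "x \<in> ?S"
        obtain k S M where xk: "x = (k, S, M)" by (cases x) auto
        from x xk have hh: "k \<le> n" "even (n - k)" "sum_mset S = k" "sum_mset M = (n - k) div 2"
          "set_mset S \<subseteq> A" "set_mset M \<subseteq> A"
          by (auto simp: KK_def DD_def PP_def)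
        then have s1: "sum_mset S + 2 * sum_mset M = n" by presburger
        have s2: "sum_mset (S + M + M) = sum_mset S + 2 * sum_mset M" by simp
        have "set_mset (S + M + M) \<subseteq> A" using hh(5,6) by simp
        then have "S + M + M \<in> PP A n" using s1 s2 unfolding PP_def by simp
        then show "?g x \<in> PP A n" using xk by simp
      qed
      show "PP A n \<subseteq> ?g ` ?S"
      proof
        fix M assume M: "M \<in> PP A n"
        let ?k = "sum_mset (parm M)"
        have sm: "sum_mset M = ?k + 2 * sum_mset (halfm M)"
          using arg_cong[OF decomp[of M], of sum_mset] by simp
        have nk: "n - ?k = 2 * sum_mset (halfm M)" "?k \<le> n" using sm M by (auto simp: PP_def)
        have "even (n - ?k)" using nk(1) by (metis dvd_triv_left)
        then have "?k \<in> KK n" using nk(2) unfolding KK_def by blast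
        moreover have "parm M \<in> DD A ?k" using M set_parm[of M] by (auto simp: DD_def PP_def)
        moreover have "halfm M \<in> PP A ((n - ?k) div 2)" using M set_halfm[of M] nk(1) by (auto simp: PP_def)
        ultimately have "(?k, parm M, halfm M) \<in> ?S" by simp
        moreover have "M = ?g (?k, parm M, halfm M)" using decomp[of M] by simp
        ultimately show "M \<in> ?g ` ?S" by blast
      qed
    qed
  qed
  then have "card (PP A n) = card ?S" by (simp add: bij_betw_same_card)
  also have "\<dots> = (\<Sum>k\<in>KK n. card (DD A k \<times> PP A ((n - k) div 2)))"
    by (rule card_SigmaI) (use finite_KK finite_DD[OF assms] finite_PP[OF assms] in auto)
  also have "\<dots> = (\<Sum>k\<in>KK n. card (DD A k) * card (PP A ((n - k) div 2)))"
    by (simp add: card_cartesian_product)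
  finally show ?thesis .
qed


definition supp :: "(nat \<Rightarrow> nat) \<Rightarrow> nat set" where "supp N = {i. N i \<noteq> 0}"
definition SS :: "(nat \<Rightarrow> nat) \<Rightarrow> nat" where "SS N = (\<Sum>i\<in>supp N. 2 ^ i * N i)"
definition II :: "nat \<Rightarrow> (nat \<Rightarrow> nat) set" where "II n = {N. finite (supp N) \<and> n = SS N}"
definition Pr :: "(nat \<Rightarrow> nat) \<Rightarrow> (nat \<Rightarrow> nat) \<Rightarrow> nat" where
  "Pr d N = (\<Prod>j\<in>supp N. d (N j))"

lemma SS_upto: "supp N \<subseteq> {..<m} \<Longrightarrow> SS N = (\<Sum>i<m. 2 ^ i * N i)"
  unfolding SS_def by (rule sum.mono_neutral_left) (auto simp: supp_def)

lemma Pr_upto: "d 0 = 1 \<Longrightarrow> supp N \<subseteq> {..<m} \<Longrightarrow> Pr d N = (\<Prod>i<m. d (N i))"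
  unfolding Pr_def by (rule prod.mono_neutral_left) (auto simp: supp_def)

lemma supp_case: "supp (case_nat k N') \<subseteq> insert 0 (Suc ` supp N')"
proof
  fix x assume "x \<in> supp (case_nat k N')"
  then show "x \<in> insert 0 (Suc ` supp N')" by (cases x) (auto simp: supp_def)
qed

lemma supp_case_finite: "finite (supp (case_nat k N')) = finite (supp N')"
proof
  assume "finite (supp N')" then show "finite (supp (case_nat k N'))"
    using supp_case finite_subset by blast
next
  assume f: "finite (supp (case_nat k N'))"
  have "supp N' \<subseteq> (\<lambda>i. i - 1) ` supp (case_nat k N')"
  proof
    fix x assume "x \<in> supp N'"
    then have "Suc x \<in> supp (case_nat k N')" by (simp add: supp_def)
    moreover have "x = Suc x - 1" by simp
    ultimately show "x \<in> (\<lambda>i. i - 1) ` supp (case_nat k N')" by blast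
  qed
  then show "finite (supp N')" using f finite_subset by blast
qed

lemma shift_facts:
  assumes f: "finite (supp N')"
  shows "SS (case_nat k N') = k + 2 * SS N'" and "d 0 = 1 \<Longrightarrow> Pr d (case_nat k N') = d k * Pr d N'"
proof -
  obtain m where m: "supp N' \<subseteq> {..<m}" using f finite_nat_set_iff_bounded by (auto simp: subset_eq)
  have m2: "supp (case_nat k N') \<subseteq> {..<Suc m}" using m supp_case[of k N'] by auto
  show "SS (case_nat k N') = k + 2 * SS N'"
    unfolding SS_upto[OF m] SS_upto[OF m2] sum.lessThan_Suc_shift
    by (simp add: sum_distrib_left mult.assoc)
  assume d: "d 0 = 1"
  show "Pr d (case_nat k N') = d k * Pr d N'"
    unfolding Pr_upto[of d N' m, OF d m] Pr_upto[of d "case_nat k N'" "Suc m", OF d m2] prod.lessThan_Suc_shift by simp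
qed

lemma II_bound: assumes "N \<in> II n" "N i \<noteq> 0" shows "2 ^ i * N i \<le> n"
proof -
  have "finite (supp N)" "i \<in> supp N" "n = SS N" using assms by (auto simp: II_def supp_def)
  then show ?thesis unfolding SS_def by (metis (no_types, lifting) member_le_sum zero_le)
qed

lemma finite_II: "finite (II n)"
proof (rule inj_on_finite[where f = "\<lambda>N. restrict N {..n}" and B = "PiE {..n} (\<lambda>_. {..n})"])
  have bnd: "i \<le> n \<and> N i \<le> n" if "N \<in> II n" "N i \<noteq> 0" for N i
  proof -
    have b: "2 ^ i * N i \<le> n" by (rule II_bound[OF that])
    have "i < 2 ^ i" by (rule less_exp)
    moreover have "2 ^ i \<le> 2 ^ i * N i" "N i \<le> 2 ^ i * N i" using that(2) by auto
    ultimately show ?thesis using b by linarith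
  qed
  show "inj_on (\<lambda>N. restrict N {..n}) (II n)"
  proof (rule inj_onI)
    fix M M' assume h: "M \<in> II n" "M' \<in> II n" "restrict M {..n} = restrict M' {..n}"
    show "M = M'"
    proof (rule ext)
      fix x show "M x = M' x"
      proof (cases "x \<le> n")
        case True then show ?thesis using h(3) by (metis atMost_iff restrict_apply')
      next
        case False
        then have "M x = 0" "M' x = 0" using bnd[of M x] bnd[of M' x] h(1,2) by auto
        then show ?thesis by simp
      qed
    qed
  qed
  show "(\<lambda>N. restrict N {..n}) ` II n \<subseteq> PiE {..n} (\<lambda>_. {..n})"
  proof (rule image_subsetI)
    fix N assume N: "N \<in> II n"
    have "\<forall>x\<in>{..n}. N x \<in> {..n}"
    proof
      fix x show "N x \<in> {..n}" using bnd[OF N, of x] by (cases "N x = 0") auto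
    qed
    then show "restrict N {..n} \<in> PiE {..n} (\<lambda>_. {..n})" by (simp add: restrict_PiE_iff)
  qed
  show "finite (PiE {..n} (\<lambda>_::nat. {..n::nat}))" by (rule finite_PiE) auto
qed

lemma rec_R:
  assumes d: "d 0 = 1"
  shows "(\<Sum>N\<in>II n. Pr d N) = (\<Sum>k\<in>KK n. d k * (\<Sum>N\<in>II ((n - k) div 2). Pr d N))"
proof -
  let ?S = "SIGMA k:KK n. II ((n - k) div 2)"
  let ?h = "\<lambda>(k, N'). case_nat k N'"
  have "bij_betw ?h ?S (II n)"
  proof (rule bij_betw_imageI)
    show "inj_on ?h ?S"
    proof (rule inj_onI)
      fix x y assume xy: "x \<in> ?S" "y \<in> ?S" "?h x = ?h y"
      obtain k N where x: "x = (k, N)" by (cases x)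
      obtain k' N' where y: "y = (k', N')" by (cases y)
      have e: "case_nat k N = case_nat k' N'" using xy(3) x y by simp
      have "k = k'" using fun_cong[OF e, of 0] by simp
      moreover have "N = N'" proof (rule ext)
        fix i show "N i = N' i" using fun_cong[OF e, of "Suc i"] by simp
      qed
      ultimately show "x = y" using x y by simp
    qed
    show "?h ` ?S = II n"
    proof
      show "?h ` ?S \<subseteq> II n"
      proof (rule image_subsetI)
        fix x assume x: "x \<in> ?S"
        obtain k N' where kN: "x = (k, N')" by (cases x)
        from x kN have "k \<le> n" "even (n - k)" "finite (supp N')" "SS N' = (n - k) div 2"
          by (auto simp: KK_def II_def)
        then have "case_nat k N' \<in> II n"
          unfolding II_def using shift_facts(1)[of N' k] supp_case_finite[of k N'] by auto
        then show "?h x \<in> II n" using kN by simp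
      qed
      show "II n \<subseteq> ?h ` ?S"
      proof
        fix N assume N: "N \<in> II n"
        define N' where "N' = (\<lambda>i. N (Suc i))"
        have eq: "case_nat (N 0) N' = N" by (rule ext) (simp add: N'_def split: nat.splits)
        have f: "finite (supp N')" using N supp_case_finite[of "N 0" N'] eq
          by (simp add: II_def)
        have "n = N 0 + 2 * SS N'" using N shift_facts(1)[OF f, of "N 0"] eq
          by (simp add: II_def)
        then have "(N 0, N') \<in> ?S" using f by (auto simp: KK_def II_def)
        moreover have "N = ?h (N 0, N')" using eq by simp
        ultimately show "N \<in> ?h ` ?S" by blast
      qed
    qed
  qed
  then have "(\<Sum>N\<in>II n. Pr d N) = (\<Sum>x\<in>?S. Pr d (?h x))"
    by (simp add: sum.reindex_bij_betw)
  also have "\<dots> = (\<Sum>(k, N')\<in>?S. d k * Pr d N')"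
  proof (rule sum.cong[OF refl])
    fix x assume x: "x \<in> ?S"
    obtain k N' where kN: "x = (k, N')" by (cases x)
    from x kN have "finite (supp N')" by (auto simp: II_def)
    then show "Pr d (?h x) = (case x of (k, N') \<Rightarrow> d k * Pr d N')"
      using shift_facts(2)[of N' d k] d kN by simp
  qed
  also have "\<dots> = (\<Sum>k\<in>KK n. \<Sum>N'\<in>II ((n - k) div 2). d k * Pr d N')"
    by (rule sum.Sigma[symmetric]) (auto simp: finite_KK finite_II)
  also have "\<dots> = (\<Sum>k\<in>KK n. d k * (\<Sum>N\<in>II ((n - k) div 2). Pr d N))"
    by (simp add: sum_distrib_left)
  finally show ?thesis .
qed


lemma PP0: assumes "0 \<notin> A" shows "PP A 0 = {{#}}"
proof -
  have "M = {#}" if "M \<in> PP A 0" for M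
  proof -
    have "\<forall>x\<in>#M. x = 0" "set_mset M \<subseteq> A" using that by (auto simp: PP_def)
    then show ?thesis using assms by (metis multiset_nonemptyE subsetD)
  qed
  then show ?thesis by (auto simp: PP_def)
qed

lemma DD0: assumes "0 \<notin> A" shows "DD A 0 = {{#}}"
  using PP0[OF assms] by (auto simp: DD_def PP_def)

lemma II0: "II 0 = {\<lambda>_. 0}"
proof -
  have "N = (\<lambda>_. 0)" if "N \<in> II 0" for N
  proof (rule ext)
    fix i show "N i = 0" using II_bound[OF that, of i] by (cases "N i = 0") auto
  qed
  moreover have "(\<lambda>_. 0) \<in> II 0" by (simp add: II_def SS_def supp_def)
  ultimately show ?thesis by blast
qed

lemma main_eq:
  assumes A0: "0 \<notin> A"
  shows "card (PP A n) = (\<Sum>N\<in>II n. Pr (\<lambda>k. card (DD A k)) N)"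
proof (induction n rule: less_induct)
  case (less n)
  let ?d = "\<lambda>k. card (DD A k)"
  have d0: "?d 0 = 1" using DD0[OF A0] by simp
  show ?case
  proof (cases "n = 0")
    case True
    then show ?thesis using PP0[OF A0] II0 by (simp add: Pr_def supp_def)
  next
    case False
    have "card (PP A n) = (\<Sum>k\<in>KK n. ?d k * card (PP A ((n - k) div 2)))" by (rule rec_P[OF A0])
    also have "\<dots> = (\<Sum>k\<in>KK n. ?d k * (\<Sum>N\<in>II ((n - k) div 2). Pr ?d N))"
    proof (rule sum.cong[OF refl])
      fix k assume "k \<in> KK n"
      then have "(n - k) div 2 < n" using False by auto
      then show "?d k * card (PP A ((n - k) div 2)) = ?d k * (\<Sum>N\<in>II ((n - k) div 2). Pr ?d N)"
        using less.IH by simp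
    qed
    also have "\<dots> = (\<Sum>N\<in>II n. Pr ?d N)" by (rule rec_R[of ?d n, OF d0, symmetric])
    finally show ?thesis .
  qed
qed

theorem mainTheorem1:
  fixes \<psi> :: "nat \<Rightarrow> nat" and A :: "nat set" and n :: nat
  assumes "inj_on \<psi> {1..}"
    and "\<forall>k\<ge>1. \<psi> k \<ge> 1"
    and "A = \<psi> ` {1..}"
  shows "part_count A n =
    (\<Sum>N \<in> {N :: nat \<Rightarrow> nat. finite {i. N i \<noteq> 0} \<and>
                n = (\<Sum>i\<in>{i. N i \<noteq> 0}. 2 ^ i * N i)}.
        \<Prod>j\<in>{j. N j \<noteq> 0}. part_count_bounded A 1 (N j))"
proof -
  have A0: "0 \<notin> A" using assms(2,3) by fastforce
  have "part_count A n = card (PP A n)" by (simp add: part_count_def PP_def)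
  also have "\<dots> = (\<Sum>N\<in>II n. Pr (\<lambda>k. card (DD A k)) N)" by (rule main_eq[OF A0])
  also have "\<dots> = (\<Sum>N \<in> {N :: nat \<Rightarrow> nat. finite {i. N i \<noteq> 0} \<and>
                n = (\<Sum>i\<in>{i. N i \<noteq> 0}. 2 ^ i * N i)}.
        \<Prod>j\<in>{j. N j \<noteq> 0}. part_count_bounded A 1 (N j))"
    by (simp add: II_def SS_def supp_def Pr_def part_count_bounded_def DD_def)
  finally show ?thesis .
qed

end
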